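(* For every graph $G$ and every integer $m\ge 1$, the super subdivision of $G$ (obtained by replacing every edge of $G$ by a complete bipartite graph $K_{2,m}$) admits a uniform WIASI.
   Context: All graphs are finite, simple and without isolated vertices. $\mathbb{N}_0$ denotes the set of non-negative integers; for finite $A,B\subseteq\mathbb{N}_0$, $A+B=\{a+b: a\in A, b\in B\}$. An integer additive set-indexer (IASI) of a graph $G$ is an injective map $f$ from $V(G)$ to the finite non-empty subsets of $\mathbb{N}_0$ such that the induced edge map $f^+(uv)=f(u)+f(v)$ is injective on $E(G)$. A weak IASI (WIASI) is an IASI $f$ with $|f^+(uv)|=\max(|f(u)|,|f(v)|)$ for every edge $uv$. For an integer $k\ge 2$, a WIASI $f$ is $k$-uniform if $|f^+(e)|=k$ for every edge $e$; $G$ admits a uniform WIASI (UWIASI) if it admits a $k$-uniform WIASI for some integer $k\ge 2$. In the super subdivision, each edge $uv$ of $G$ is replaced by $m$ new vertices $x_1,\dots,x_m$, each adjacent to both $u$ and $v$ (the edge $uv$ itself being removed), so that $u,v$ form the part of size $2$ of a $K_{2,m}$. *)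

theory Defs
  imports Main
begin

definition graph :: "'v set \<Rightarrow> 'v set set \<Rightarrow> bool" where
  "graph V E \<longleftrightarrow> finite V \<and> (\<forall>e\<in>E. e \<subseteq> V \<and> card e = 2) \<and> (\<forall>v\<in>V. \<exists>e\<in>E. v \<in> e)"

definition sumset :: "nat set \<Rightarrow> nat set \<Rightarrow> nat set" where
  "sumset A B = {a + b | a b. a \<in> A \<and> b \<in> B}"

text \<open>Integer additive set-indexer: injective vertex labelling by finite nonempty subsets of N0,
  whose induced edge map {u,v} |-> f u + f v is injective on E.\<close>
definition IASI :: "'v set \<Rightarrow> 'v set set \<Rightarrow> ('v \<Rightarrow> nat set) \<Rightarrow> bool" where
  "IASI V E f \<longleftrightarrow> inj_on f V \<and> (\<forall>v\<in>V. finite (f v) \<and> f v \<noteq> {}) \<and>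
     (\<forall>u v u' v'. {u, v} \<in> E \<longrightarrow> {u', v'} \<in> E \<longrightarrow>
        sumset (f u) (f v) = sumset (f u') (f v') \<longrightarrow> {u, v} = {u', v'})"

definition WIASI :: "'v set \<Rightarrow> 'v set set \<Rightarrow> ('v \<Rightarrow> nat set) \<Rightarrow> bool" where
  "WIASI V E f \<longleftrightarrow> IASI V E f \<and>
     (\<forall>u v. {u, v} \<in> E \<longrightarrow> card (sumset (f u) (f v)) = max (card (f u)) (card (f v)))"

definition k_uniform_WIASI :: "nat \<Rightarrow> 'v set \<Rightarrow> 'v set set \<Rightarrow> ('v \<Rightarrow> nat set) \<Rightarrow> bool" where
  "k_uniform_WIASI k V E f \<longleftrightarrow> WIASI V E f \<and>
     (\<forall>u v. {u, v} \<in> E \<longrightarrow> card (sumset (f u) (f v)) = k)"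

definition admits_UWIASI :: "'v set \<Rightarrow> 'v set set \<Rightarrow> bool" where
  "admits_UWIASI V E \<longleftrightarrow> (\<exists>k::nat. k \<ge> 2 \<and> (\<exists>f. k_uniform_WIASI k V E f))"

text \<open>Super subdivision: each edge e is replaced by m new vertices Inr (e,i), i < m,
  each adjacent to both endpoints of e.\<close>
definition ss_vertices :: "'v set \<Rightarrow> 'v set set \<Rightarrow> nat \<Rightarrow> ('v + 'v set \<times> nat) set" where
  "ss_vertices V E m = Inl ` V \<union> {Inr (e, i) | e i. e \<in> E \<and> i < m}"

definition ss_edges :: "'v set \<Rightarrow> 'v set set \<Rightarrow> nat \<Rightarrow> ('v + 'v set \<times> nat) set set" where
  "ss_edges V E m = {{Inl u, Inr (e, i)} | u e i. e \<in> E \<and> u \<in> e \<and> i < m}"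

end

theory Submission
  imports Defs
begin

lemma sumset_single: "sumset {a} {0, d} = {a, a + d}"
  unfolding sumset_def by auto

lemma sumset_comm: "sumset A B = sumset B A"
  unfolding sumset_def by (auto simp: add.commute) (metis add.commute)+

lemma pair_eq: "(a::nat) \<le> a + d \<Longrightarrow> d > 0 \<Longrightarrow> d' > 0 \<Longrightarrow> {a, a + d} = {a', a' + d'} \<Longrightarrow> a = a' \<and> d = d'"
  by (auto simp: doubleton_eq_iff)

theorem mainTheorem16:
  fixes V :: "'v set" and E :: "'v set set" and m :: nat
  assumes "graph V E" and "m \<ge> 1"
  shows "admits_UWIASI (ss_vertices V E m) (ss_edges V E m)"
proof -
  have fV: "finite V" using assms(1) unfolding graph_def by auto
  have EV: "E \<subseteq> Pow V" using assms(1) unfolding graph_def by auto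
  have fE: "finite E" using fV EV finite_subset by blast
  define S where "S = E \<times> {..<m}"
  have fS: "finite S" unfolding S_def using fE by auto
  obtain h :: "'v \<Rightarrow> nat" where h: "inj_on h V" using finite_imp_inj_to_nat_seg[OF fV] by metis
  obtain g :: "'v set \<times> nat \<Rightarrow> nat" where g: "inj_on g S" using finite_imp_inj_to_nat_seg[OF fS] by metis
  define f where "f = case_sum (\<lambda>x. {h x}) (\<lambda>p. {0, g p + 1})"
  have key: "\<exists>x p. {u, v} = {Inl x, Inr p} \<and> x \<in> V \<and> p \<in> S \<and>
      sumset (f u) (f v) = {h x, h x + (g p + 1)} \<and> max (card (f u)) (card (f v)) = 2"
    if "{u, v} \<in> ss_edges V E m" for u v
  proof -
    from that obtain x e i where e: "{u,v} = {Inl x, Inr (e, i)}" "e \<in> E" "x \<in> e" "i < m"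
      unfolding ss_edges_def by blast
    have xV: "x \<in> V" using e EV by auto
    have pS: "(e,i) \<in> S" using e unfolding S_def by auto
    from e(1) have "(u = Inl x \<and> v = Inr (e,i)) \<or> (u = Inr (e,i) \<and> v = Inl x)"
      by (auto simp: doubleton_eq_iff)
    then have "sumset (f u) (f v) = {h x, h x + (g (e,i) + 1)} \<and> max (card (f u)) (card (f v)) = 2"
      by (auto simp: f_def sumset_single sumset_comm[of "{0, _}"])
    then show ?thesis using e xV pS by blast
  qed
  have "k_uniform_WIASI 2 (ss_vertices V E m) (ss_edges V E m) f"
    unfolding k_uniform_WIASI_def WIASI_def IASI_def
  proof (intro conjI allI impI ballI)
    show "inj_on f (ss_vertices V E m)"
    proof (rule inj_onI)
      fix a b assume a: "a \<in> ss_vertices V E m" and b: "b \<in> ss_vertices V E m" and ab: "f a = f b"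
      show "a = b"
      proof (cases a)
        case (Inl x)
        then have xV: "x \<in> V" using a unfolding ss_vertices_def by auto
        show ?thesis
        proof (cases b)
          case (Inl y)
          then have "y \<in> V" using b unfolding ss_vertices_def by auto
          then show ?thesis using ab \<open>a = Inl x\<close> Inl xV h by (auto simp: f_def inj_on_def)
        next
          case (Inr q)
          then show ?thesis using ab \<open>a = Inl x\<close> by (auto simp: f_def doubleton_eq_iff)
        qed
      next
        case (Inr p)
        then have pS: "p \<in> S" using a unfolding ss_vertices_def S_def by auto
        show ?thesis
        proof (cases b)
          case (Inl y)
          then show ?thesis using ab \<open>a = Inr p\<close> by (auto simp: f_def doubleton_eq_iff)
        next
          case (Inr q)
          then have "q \<in> S" using b unfolding ss_vertices_def S_def by auto
          moreover have "g p = g q" using ab \<open>a = Inr p\<close> Inr by (auto simp: f_def doubleton_eq_iff)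
          ultimately show ?thesis using g pS \<open>a = Inr p\<close> Inr by (auto simp: inj_on_def)
        qed
      qed
    qed
  next
    fix v assume "v \<in> ss_vertices V E m"
    show "finite (f v)" by (cases v) (auto simp: f_def)
    show "f v \<noteq> {}" by (cases v) (auto simp: f_def)
  next
    fix u v u' v'
    assume e1: "{u, v} \<in> ss_edges V E m" and e2: "{u', v'} \<in> ss_edges V E m"
      and eq: "sumset (f u) (f v) = sumset (f u') (f v')"
    obtain x p where k1: "{u, v} = {Inl x, Inr p}" "x \<in> V" "p \<in> S"
      "sumset (f u) (f v) = {h x, h x + (g p + 1)}" using key[OF e1] by blast
    obtain x' p' where k2: "{u', v'} = {Inl x', Inr p'}" "x' \<in> V" "p' \<in> S"
      "sumset (f u') (f v') = {h x', h x' + (g p' + 1)}" using key[OF e2] by blast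
    have "h x = h x' \<and> g p + 1 = g p' + 1"
      using pair_eq[of "h x" "g p + 1" "g p' + 1" "h x'"] eq k1(4) k2(4) by auto
    then have "x = x'" "p = p'" using h g k1 k2 by (auto simp: inj_on_def)
    then show "{u, v} = {u', v'}" using k1 k2 by simp
  next
    fix u v assume "{u, v} \<in> ss_edges V E m"
    from key[OF this] obtain x p where "sumset (f u) (f v) = {h x, h x + (g p + 1)}"
      "max (card (f u)) (card (f v)) = 2" by blast
    then show "card (sumset (f u) (f v)) = max (card (f u)) (card (f v))"
      and "card (sumset (f u) (f v)) = 2" by auto
  qed
  then show ?thesis unfolding admits_UWIASI_def by blast
qed

end
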